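(* Let $1<p<\infty$, $\varepsilon>0$, and let $u$ be a smooth solution of $u_t=a_{ij}(\nabla u)u_{ij}$ in $Q_1$, where $a_{ij}(q)=\delta_{ij}+(p-2)\frac{q_iq_j}{|q|^2+\varepsilon^2}$. Let $\varphi:=(|\nabla u|^2+\varepsilon^2)^{p/2}$. Then $$\partial_t\varphi-a_{ij}(\nabla u)\partial_{ij}\varphi\le0\quad\text{in }Q_1.$$
   Context: $\nabla$ is the spatial gradient, $u_{ij}=\partial_{x_ix_j}u$, summation over repeated indices, $Q_1=B_1\times(-1,0]$ with $B_1$ the unit ball of $\mathbb{R}^n$. *)

theory Defs
  imports "HOL-Analysis.Analysis"
begin

text \<open>Directional derivative of g at z in direction v, relative to the domain S
  (one-sided where z lies on the boundary of S).\<close>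
definition ddir :: "('a::real_normed_vector) set \<Rightarrow> 'a \<Rightarrow> ('a \<Rightarrow> real) \<Rightarrow> 'a \<Rightarrow> real" where
  "ddir S v g z = vector_derivative (\<lambda>h::real. g (z + h *\<^sub>R v)) (at 0 within {h. z + h *\<^sub>R v \<in> S})"

fun dds :: "('a::real_normed_vector) set \<Rightarrow> 'a list \<Rightarrow> ('a \<Rightarrow> real) \<Rightarrow> 'a \<Rightarrow> real" where
  "dds S [] g = g"
| "dds S (v # vs) g = ddir S v (dds S vs g)"

definition smooth_on :: "('a::real_normed_vector) set \<Rightarrow> ('a \<Rightarrow> real) \<Rightarrow> bool" where
  "smooth_on S g \<longleftrightarrow>
     (\<forall>vs. continuous_on S (dds S vs g) \<and>
       (\<forall>v. \<forall>z\<in>S. ((\<lambda>h::real. dds S vs g (z + h *\<^sub>R v)) has_vector_derivative dds S (v # vs) g z)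
                     (at 0 within {h. z + h *\<^sub>R v \<in> S})))"

definition Q1 :: "((real^'n) \<times> real) set" where
  "Q1 = ball 0 1 \<times> {-1<..0}"

definition espace :: "'n \<Rightarrow> (real^'n) \<times> real" where
  "espace i = (axis i 1, 0)"

definition etime :: "(real^'n) \<times> real" where
  "etime = (0, 1)"

definition pd1 :: "'n \<Rightarrow> ((real^'n) \<times> real \<Rightarrow> real) \<Rightarrow> (real^'n) \<times> real \<Rightarrow> real" where
  "pd1 i g = dds Q1 [espace i] g"

definition pd2 :: "'n \<Rightarrow> 'n \<Rightarrow> ((real^'n) \<times> real \<Rightarrow> real) \<Rightarrow> (real^'n) \<times> real \<Rightarrow> real" where
  "pd2 i j g = dds Q1 [espace i, espace j] g"

definition pdt :: "((real^'n) \<times> real \<Rightarrow> real) \<Rightarrow> (real^'n) \<times> real \<Rightarrow> real" where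
  "pdt g = dds Q1 [etime] g"

definition grad :: "((real^'n) \<times> real \<Rightarrow> real) \<Rightarrow> (real^'n) \<times> real \<Rightarrow> real^'n" where
  "grad g z = (\<chi> i. pd1 i g z)"

definition acoef :: "real \<Rightarrow> real \<Rightarrow> 'n \<Rightarrow> 'n \<Rightarrow> real^'n \<Rightarrow> real" where
  "acoef p \<epsilon> i j q = (if i = j then 1 else 0) + (p - 2) * (q $ i * q $ j) / ((norm q)\<^sup>2 + \<epsilon>\<^sup>2)"

end

theory Submission
  imports Defs
begin


lemma clairaut_abs:
  fixes F Fs Ft Fst Fts :: "real \<Rightarrow> real \<Rightarrow> real" and d :: real
  assumes d: "0 < d"
    and Fs: "\<And>s t. \<bar>s\<bar> < d \<Longrightarrow> \<bar>t\<bar> < d \<Longrightarrow> ((\<lambda>x. F x t) has_real_derivative Fs s t) (at s)"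
    and Fst: "\<And>s t. \<bar>s\<bar> < d \<Longrightarrow> \<bar>t\<bar> < d \<Longrightarrow> ((\<lambda>y. Fs s y) has_real_derivative Fst s t) (at t)"
    and Ft: "\<And>s t. \<bar>s\<bar> < d \<Longrightarrow> \<bar>t\<bar> < d \<Longrightarrow> ((\<lambda>y. F s y) has_real_derivative Ft s t) (at t)"
    and Fts: "\<And>s t. \<bar>s\<bar> < d \<Longrightarrow> \<bar>t\<bar> < d \<Longrightarrow> ((\<lambda>x. Ft x t) has_real_derivative Fts s t) (at s)"
    and cst: "\<And>e. e > 0 \<Longrightarrow> \<exists>r>0. \<forall>s t. \<bar>s\<bar> < r \<longrightarrow> \<bar>t\<bar> < r \<longrightarrow> \<bar>Fst s t - Fst 0 0\<bar> < e"
    and cts: "\<And>e. e > 0 \<Longrightarrow> \<exists>r>0. \<forall>s t. \<bar>s\<bar> < r \<longrightarrow> \<bar>t\<bar> < r \<longrightarrow> \<bar>Fts s t - Fts 0 0\<bar> < e"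
  shows "Fst 0 0 = Fts 0 0"
proof -
  have key: "\<exists>s1 t1 s2 t2. \<bar>s1\<bar> < h \<and> \<bar>t1\<bar> < h \<and> \<bar>s2\<bar> < h \<and> \<bar>t2\<bar> < h \<and> Fst s1 t1 = Fts s2 t2"
    if h: "0 < h" "h < d" for h
  proof -
    define Dl where "Dl = F h h - F h 0 - F 0 h + F 0 0"
    obtain s1 where s1: "0 < s1" "s1 < h" "(F h h - F h 0) - (F 0 h - F 0 0) = (h - 0) * (Fs s1 h - Fs s1 0)"
    proof -
      have "\<And>x. 0 \<le> x \<Longrightarrow> x \<le> h \<Longrightarrow> ((\<lambda>x. F x h - F x 0) has_real_derivative Fs x h - Fs x 0) (at x)"
        using h by (intro derivative_intros Fs) auto
      then show ?thesis using MVT2[of 0 h "\<lambda>x. F x h - F x 0" "\<lambda>x. Fs x h - Fs x 0"] h that by auto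
    qed
    obtain t1 where t1: "0 < t1" "t1 < h" "Fs s1 h - Fs s1 0 = (h - 0) * Fst s1 t1"
    proof -
      have "\<And>x. 0 \<le> x \<Longrightarrow> x \<le> h \<Longrightarrow> ((\<lambda>y. Fs s1 y) has_real_derivative Fst s1 x) (at x)"
        using h s1 by (intro Fst) auto
      then show ?thesis using MVT2[of 0 h "\<lambda>y. Fs s1 y" "\<lambda>y. Fst s1 y"] h that by auto
    qed
    obtain t2 where t2: "0 < t2" "t2 < h" "(F h h - F 0 h) - (F h 0 - F 0 0) = (h - 0) * (Ft h t2 - Ft 0 t2)"
    proof -
      have "\<And>x. 0 \<le> x \<Longrightarrow> x \<le> h \<Longrightarrow> ((\<lambda>y. F h y - F 0 y) has_real_derivative Ft h x - Ft 0 x) (at x)"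
        using h by (intro derivative_intros Ft) auto
      then show ?thesis using MVT2[of 0 h "\<lambda>y. F h y - F 0 y" "\<lambda>y. Ft h y - Ft 0 y"] h that by auto
    qed
    obtain s2 where s2: "0 < s2" "s2 < h" "Ft h t2 - Ft 0 t2 = (h - 0) * Fts s2 t2"
    proof -
      have "\<And>x. 0 \<le> x \<Longrightarrow> x \<le> h \<Longrightarrow> ((\<lambda>x. Ft x t2) has_real_derivative Fts x t2) (at x)"
        using h t2 by (intro Fts) auto
      then show ?thesis using MVT2[of 0 h "\<lambda>x. Ft x t2" "\<lambda>x. Fts x t2"] h that by auto
    qed
    have "h * (h * Fst s1 t1) = h * (h * Fts s2 t2)"
      using s1(3) t1(3) t2(3) s2(3) by (simp add: algebra_simps)
    then have "Fst s1 t1 = Fts s2 t2" using h by simp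
    then show ?thesis using s1 t1 s2 t2 by (intro exI[of _ s1] exI[of _ t1] exI[of _ s2] exI[of _ t2]) auto
  qed
  show ?thesis
  proof (rule ccontr)
    assume ne: "Fst 0 0 \<noteq> Fts 0 0"
    define e where "e = \<bar>Fst 0 0 - Fts 0 0\<bar> / 2"
    have e: "e > 0" using ne by (simp add: e_def)
    obtain r1 where r1: "r1 > 0" "\<forall>s t. \<bar>s\<bar> < r1 \<longrightarrow> \<bar>t\<bar> < r1 \<longrightarrow> \<bar>Fst s t - Fst 0 0\<bar> < e"
      using cst[OF e] by blast
    obtain r2 where r2: "r2 > 0" "\<forall>s t. \<bar>s\<bar> < r2 \<longrightarrow> \<bar>t\<bar> < r2 \<longrightarrow> \<bar>Fts s t - Fts 0 0\<bar> < e"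
      using cts[OF e] by blast
    define h where "h = min (min r1 r2) d / 2"
    have h: "0 < h" "h < d" "h < r1" "h < r2" using r1 r2 d by (auto simp: h_def)
    obtain s1 t1 s2 t2 where st: "\<bar>s1\<bar> < h" "\<bar>t1\<bar> < h" "\<bar>s2\<bar> < h" "\<bar>t2\<bar> < h" "Fst s1 t1 = Fts s2 t2"
      using key[OF h(1,2)] by blast
    have "\<bar>Fst s1 t1 - Fst 0 0\<bar> < e" using r1(2) st(1-4) h by force
    moreover have "\<bar>Fts s2 t2 - Fts 0 0\<bar> < e" using r2(2) st(1-4) h by force
    ultimately show False using st(5) by (simp add: e_def abs_if split: if_splits)
  qed
qed


definition TT :: "(real^'n) \<times> real \<Rightarrow> (real^'n) \<times> real \<Rightarrow> real set" where
  "TT z v = {h. z + h *\<^sub>R v \<in> Q1}"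

definition dirs :: "((real^'n) \<times> real) set" where
  "dirs = range espace \<union> {etime}"

definition Q1o :: "((real^'n) \<times> real) set" where
  "Q1o = ball 0 1 \<times> {-1<..<0}"

lemma Q1o_sub: "Q1o \<subseteq> Q1"
  by (auto simp: Q1o_def Q1_def)

lemma open_Q1o: "open Q1o"
  by (simp add: Q1o_def open_Times)

lemma smooth_deriv:
  assumes "smooth_on Q1 g" "z \<in> Q1"
  shows "((\<lambda>h. dds Q1 vs g (z + h *\<^sub>R v)) has_real_derivative dds Q1 (v # vs) g z) (at 0 within TT z v)"
  using assms unfolding smooth_on_def TT_def has_real_derivative_iff_has_vector_derivative
  by blast

lemma dds_append: "dds S vs (dds S ws g) = dds S (vs @ ws) g"
  by (induction vs) auto

lemma smooth_dds: assumes H: "smooth_on Q1 g" shows "smooth_on Q1 (dds Q1 ws g)"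
proof -
  have "\<And>vs. continuous_on Q1 (dds Q1 (vs @ ws) g) \<and>
       (\<forall>v. \<forall>z\<in>Q1. ((\<lambda>h::real. dds Q1 (vs @ ws) g (z + h *\<^sub>R v)) has_vector_derivative dds Q1 (v # (vs @ ws)) g z)
                     (at 0 within {h. z + h *\<^sub>R v \<in> Q1}))"
    using H unfolding smooth_on_def by blast
  then show ?thesis unfolding smooth_on_def dds_append append_Cons by blast
qed

lemma TT_nontriv:
  assumes z: "z \<in> Q1" and v: "v \<in> dirs"
  shows "at 0 within TT z v \<noteq> bot"
proof -
  obtain x t where zx: "z = (x, t)" by (cases z)
  have x: "norm x < 1" and t: "-1 < t" "t \<le> 0" using z by (auto simp: zx Q1_def)
  obtain \<delta> :: real where d: "\<delta> > 0" "{-\<delta>..0} \<subseteq> TT z v"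
  proof (cases "v = etime")
    case True
    show ?thesis
      by (rule that[of "(t+1)/2"]) (use t x in \<open>auto simp: TT_def True etime_def zx Q1_def divide_simps\<close>)
  next
    case False
    then obtain i where vi: "v = espace i" using v by (auto simp: dirs_def)
    show ?thesis
    proof (rule that[of "(1 - norm x)/2"])
      show "0 < (1 - norm x) / 2" using x by simp
      show "{- ((1 - norm x) / 2)..0} \<subseteq> TT z v"
      proof
        fix h assume h: "h \<in> {- ((1 - norm x) / 2)..0}"
        have "norm (x + h *\<^sub>R axis i 1) \<le> norm x + norm (h *\<^sub>R axis i (1::real))"
          by (rule norm_triangle_ineq)
        also have "\<dots> = norm x + \<bar>h\<bar>" by simp
        also have "\<dots> < 1"
        proof -
          have h1: "- ((1 - norm x) / 2) \<le> h" "h \<le> 0" using h by auto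
          then have "\<bar>h\<bar> = - h" by simp
          then show ?thesis using h1 x by (simp add: field_simps)
        qed
        finally show "h \<in> TT z v" using t by (simp add: TT_def vi espace_def zx Q1_def)
      qed
    qed
  qed
  have "(0::real) islimpt {-\<delta>..0}"
  proof -
    have e: "{-\<delta>..0} - {0} = {-\<delta>..<(0::real)}" by auto
    have "closure {-\<delta>..<(0::real)} = {-\<delta>..0}" using d by (simp add: closure_atLeastLessThan)
    then show ?thesis unfolding islimpt_in_closure e using d by simp
  qed
  then have "0 islimpt TT z v" using d(2) islimpt_subset by blast
  then show ?thesis using trivial_limit_within by blast
qed

lemma ddir_eq:
  assumes "z \<in> Q1" "v \<in> dirs"
    and "((\<lambda>h. f (z + h *\<^sub>R v)) has_real_derivative D) (at 0 within TT z v)"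
  shows "ddir Q1 v f z = D"
proof -
  have nb: "at 0 within {h. z + h *\<^sub>R v \<in> Q1} \<noteq> bot" using TT_nontriv[OF assms(1,2)] by (simp add: TT_def)
  have hv: "((\<lambda>h. f (z + h *\<^sub>R v)) has_vector_derivative D) (at 0 within {h. z + h *\<^sub>R v \<in> Q1})"
    using assms(3) by (simp add: TT_def has_real_derivative_iff_has_vector_derivative)
  show ?thesis unfolding ddir_def by (rule vector_derivative_within[OF nb hv])
qed

lemma deriv_cong:
  assumes "\<forall>y\<in>Q1. f y = g y" "z \<in> Q1"
    and "((\<lambda>h. f (z + h *\<^sub>R v)) has_real_derivative D) (at 0 within TT z v)"
  shows "((\<lambda>h. g (z + h *\<^sub>R v)) has_real_derivative D) (at 0 within TT z v)"
  by (rule has_field_derivative_transform_within[OF assms(3), of 1]) (use assms in \<open>auto simp: TT_def\<close>)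

lemma at_TT_interior:
  assumes "y \<in> Q1o"
  shows "at 0 within TT y v = at 0"
proof (rule at_within_interior)
  let ?A = "{h::real. y + h *\<^sub>R v \<in> Q1o}"
  have "open ?A"
    using open_Q1o using continuous_open_vimage[OF open_Q1o, of "\<lambda>h. y + h *\<^sub>R v"] by (auto simp: vimage_def intro!: continuous_intros)
  moreover have "0 \<in> ?A" "?A \<subseteq> TT y v" using assms Q1o_sub by (auto simp: TT_def)
  ultimately show "0 \<in> interior (TT y v)" using interior_maximal by blast
qed


lemma Q1o_interior: "y \<in> Q1o \<Longrightarrow> y \<in> interior Q1"
  using interior_maximal[OF Q1o_sub open_Q1o] by blast

lemma line_at:
  assumes "smooth_on Q1 g" "y \<in> Q1o"
  shows "((\<lambda>x. dds Q1 vs g (y + (x - s) *\<^sub>R v)) has_real_derivative dds Q1 (v # vs) g y) (at s)"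
proof -
  have "((\<lambda>h. dds Q1 vs g (y + h *\<^sub>R v)) has_real_derivative dds Q1 (v # vs) g y) (at 0)"
    using smooth_deriv[OF assms(1), of y vs v] at_TT_interior[OF assms(2)] assms(2) Q1o_sub by auto
  then have "((\<lambda>x. dds Q1 vs g (y + (x + - s) *\<^sub>R v)) has_real_derivative dds Q1 (v # vs) g y) (at s)"
    using DERIV_shift[of "\<lambda>h. dds Q1 vs g (y + h *\<^sub>R v)" _ s "-s"] by simp
  then show ?thesis by simp
qed

lemma cont_eps:
  assumes "smooth_on Q1 g" "z \<in> Q1o" "e > 0"
  shows "\<exists>r>0. \<forall>y. dist y z < r \<longrightarrow> \<bar>dds Q1 vs g y - dds Q1 vs g z\<bar> < e"
proof -
  have "continuous (at z) (dds Q1 vs g)"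
    using assms(1) Q1o_interior[OF assms(2)] unfolding smooth_on_def
    by (meson continuous_on_interior)
  then show ?thesis using assms(3) unfolding continuous_at_eps_delta dist_real_def by blast
qed

lemma clairaut_int:
  assumes g: "smooth_on Q1 g" and z: "z \<in> Q1o"
  shows "dds Q1 [w, v] g z = dds Q1 [v, w] g z"
proof -
  obtain \<rho> where \<rho>: "\<rho> > 0" "ball z \<rho> \<subseteq> Q1o" using open_Q1o z open_contains_ball by blast
  define d where "d = \<rho> / (norm v + norm w + 1)"
  have nvw: "norm v + norm w + 1 > 0" by (simp add: add_nonneg_pos)
  have d: "d > 0" using \<rho> nvw by (simp add: d_def)
  have dist_small: "dist (z + s *\<^sub>R v + t *\<^sub>R w) z < r * (norm v + norm w + 1)"
    if "\<bar>s\<bar> < r" "\<bar>t\<bar> < r" for s t r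
  proof -
    have "dist (z + s *\<^sub>R v + t *\<^sub>R w) z = norm (s *\<^sub>R v + t *\<^sub>R w)" by (simp add: dist_norm)
    also have "\<dots> \<le> \<bar>s\<bar> * norm v + \<bar>t\<bar> * norm w"
      by (metis norm_scaleR norm_triangle_ineq)
    also have "\<dots> \<le> r * norm v + r * norm w"
      using that by (intro add_mono mult_right_mono) auto
    also have "\<dots> < r * (norm v + norm w + 1)"
      using that by (simp add: algebra_simps)
    finally show ?thesis .
  qed
  have inb: "z + s *\<^sub>R v + t *\<^sub>R w \<in> Q1o" if "\<bar>s\<bar> < d" "\<bar>t\<bar> < d" for s t
  proof -
    have "dist (z + s *\<^sub>R v + t *\<^sub>R w) z < d * (norm v + norm w + 1)" using dist_small that by blast
    also have "\<dots> = \<rho>" using nvw by (simp add: d_def)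
    finally show ?thesis using \<rho>(2) by (auto simp: dist_commute)
  qed
  define P where "P s t = z + s *\<^sub>R v + t *\<^sub>R w" for s t
  have ceps: "\<exists>r>0. \<forall>s t. \<bar>s\<bar> < r \<longrightarrow> \<bar>t\<bar> < r \<longrightarrow> \<bar>dds Q1 vs g (P s t) - dds Q1 vs g (P 0 0)\<bar> < e"
    if e: "e > 0" for vs e
  proof -
    obtain r where r: "r > 0" "\<forall>y. dist y z < r \<longrightarrow> \<bar>dds Q1 vs g y - dds Q1 vs g z\<bar> < e"
      using cont_eps[OF g z e] by blast
    define r' where "r' = r / (norm v + norm w + 1)"
    have r': "r' > 0" using r nvw by (simp add: r'_def)
    have "\<forall>s t. \<bar>s\<bar> < r' \<longrightarrow> \<bar>t\<bar> < r' \<longrightarrow> \<bar>dds Q1 vs g (P s t) - dds Q1 vs g (P 0 0)\<bar> < e"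
    proof (intro allI impI)
      fix s t assume "\<bar>s\<bar> < r'" "\<bar>t\<bar> < r'"
      then have "dist (P s t) z < r' * (norm v + norm w + 1)" using dist_small by (simp add: P_def)
      also have "\<dots> = r" using nvw by (simp add: r'_def)
      finally have "dist (P s t) z < r" .
      then have "\<bar>dds Q1 vs g (P s t) - dds Q1 vs g z\<bar> < e" using r(2) by blast
      moreover have "P 0 0 = z" by (simp add: P_def)
      ultimately show "\<bar>dds Q1 vs g (P s t) - dds Q1 vs g (P 0 0)\<bar> < e" by simp
    qed
    then show ?thesis using r' by blast
  qed
  have "dds Q1 [w, v] g (P 0 0) = dds Q1 [v, w] g (P 0 0)"
  proof (rule clairaut_abs[where F = "\<lambda>s t. g (P s t)" and Fs = "\<lambda>s t. dds Q1 [v] g (P s t)"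
        and Ft = "\<lambda>s t. dds Q1 [w] g (P s t)" and Fst = "\<lambda>s t. dds Q1 [w, v] g (P s t)"
        and Fts = "\<lambda>s t. dds Q1 [v, w] g (P s t)", OF d])
    fix s t :: real assume st: "\<bar>s\<bar> < d" "\<bar>t\<bar> < d"
    have y: "P s t \<in> Q1o" using inb[OF st] by (simp add: P_def)
    have f1: "(\<lambda>x. g (P x t)) = (\<lambda>x. dds Q1 [] g (P s t + (x - s) *\<^sub>R v))"
      and f2: "(\<lambda>y. dds Q1 [v] g (P s y)) = (\<lambda>y. dds Q1 [v] g (P s t + (y - t) *\<^sub>R w))"
      and f3: "(\<lambda>y. g (P s y)) = (\<lambda>y. dds Q1 [] g (P s t + (y - t) *\<^sub>R w))"
      and f4: "(\<lambda>x. dds Q1 [w] g (P x t)) = (\<lambda>x. dds Q1 [w] g (P s t + (x - s) *\<^sub>R v))"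
      by (auto simp: P_def algebra_simps)
    show "((\<lambda>x. g (P x t)) has_real_derivative dds Q1 [v] g (P s t)) (at s)"
      unfolding f1 by (rule line_at[OF g y])
    show "((\<lambda>y. dds Q1 [v] g (P s y)) has_real_derivative dds Q1 [w, v] g (P s t)) (at t)"
      unfolding f2 by (rule line_at[OF g y])
    show "((\<lambda>y. g (P s y)) has_real_derivative dds Q1 [w] g (P s t)) (at t)"
      unfolding f3 by (rule line_at[OF g y])
    show "((\<lambda>x. dds Q1 [w] g (P x t)) has_real_derivative dds Q1 [v, w] g (P s t)) (at s)"
      unfolding f4 by (rule line_at[OF g y])
  qed (use ceps in blast)+
  then show ?thesis by (simp add: P_def)
qed


lemma smooth_cont: "smooth_on Q1 g \<Longrightarrow> continuous_on Q1 (dds Q1 vs g)"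
  unfolding smooth_on_def by blast

lemma Q1_closure: "(Q1 :: ((real^'n) \<times> real) set) \<subseteq> closure Q1o"
proof -
  have "closure (Q1o :: ((real^'n) \<times> real) set) = cball 0 1 \<times> {-1..0}"
    by (simp add: Q1o_def closure_Times)
  moreover have "ball (0::real^'n) 1 \<times> {-1<..(0::real)} \<subseteq> cball 0 1 \<times> {-1..0}"
    using ball_subset_cball by (intro Sigma_mono) auto
  ultimately show ?thesis by (simp add: Q1_def)
qed

lemma clairaut:
  fixes g :: "(real^'n) \<times> real \<Rightarrow> real"
  assumes g: "smooth_on Q1 g" and z: "z \<in> Q1"
  shows "dds Q1 [w, v] g z = dds Q1 [v, w] g z"
proof -
  let ?f = "\<lambda>y. dds Q1 [w, v] g y - dds Q1 [v, w] g y"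
  have cont: "continuous_on Q1 ?f"
    by (intro continuous_on_diff smooth_cont[OF g])
  have "closedin (top_of_set (Q1 :: ((real^'n) \<times> real) set)) {y \<in> Q1. ?f y = 0}"
    by (rule continuous_closedin_preimage_constant[OF cont])
  then obtain C where C: "closed C" "{y \<in> Q1. ?f y = 0} = (Q1 :: ((real^'n) \<times> real) set) \<inter> C"
    unfolding closedin_closed by blast
  have "Q1o \<subseteq> C"
  proof
    fix y :: "(real^'n) \<times> real" assume y: "y \<in> Q1o"
    then have "dds Q1 [w, v] g y = dds Q1 [v, w] g y" using clairaut_int[OF g y] by blast
    moreover have "y \<in> Q1" using y Q1o_sub by blast
    ultimately have "y \<in> {y \<in> Q1. ?f y = 0}" by simp
    then show "y \<in> C" unfolding C(2) by blast
  qed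
  then have "closure Q1o \<subseteq> C" using C(1) closure_minimal by blast
  then have "z \<in> Q1 \<inter> C" using z Q1_closure by blast
  then have "z \<in> {y \<in> Q1. ?f y = 0}" unfolding C(2) .
  then show ?thesis by simp
qed


definition Aco :: "real \<Rightarrow> real \<Rightarrow> ('n \<Rightarrow> real) \<Rightarrow> 'n \<Rightarrow> 'n \<Rightarrow> real" where
  "Aco p W q i j = (if i = j then 1 else 0) + (p - 2) * (q i * q j) / W"

definition DWv :: "('n::finite \<Rightarrow> real) \<Rightarrow> ('n \<Rightarrow> 'n \<Rightarrow> real) \<Rightarrow> 'n \<Rightarrow> real" where
  "DWv q D i = 2 * (\<Sum>k\<in>UNIV. q k * D i k)"

definition dAco :: "real \<Rightarrow> real \<Rightarrow> ('n::finite \<Rightarrow> real) \<Rightarrow> ('n \<Rightarrow> 'n \<Rightarrow> real) \<Rightarrow> 'n \<Rightarrow> 'n \<Rightarrow> 'n \<Rightarrow> real" where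
  "dAco p W q D k i j = (p - 2) * (((D k i * q j + q i * D k j) * W - q i * q j * DWv q D k) / W\<^sup>2)"

lemma sum_delta2: "(\<Sum>i\<in>UNIV. \<Sum>j\<in>UNIV. (if i = j then (1::real) else 0) * f i j) = (\<Sum>i\<in>UNIV. f i (i::'n::finite))"
proof -
  have "\<And>i. (\<Sum>j\<in>UNIV. (if i = j then (1::real) else 0) * f i j) = (\<Sum>j\<in>UNIV. if i = j then f i j else 0)"
    by (rule sum.cong) auto
  then show ?thesis by simp
qed

lemma sum2_prod: "(\<Sum>i\<in>UNIV. \<Sum>j\<in>UNIV. f i j) = (\<Sum>x\<in>UNIV. f (fst x) (snd x))"
  by (simp only: sum.cartesian_product UNIV_Times_UNIV split_def)

lemma cs_quad:
  fixes q :: "'n::finite \<Rightarrow> real"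
  shows "(\<Sum>i\<in>UNIV. \<Sum>j\<in>UNIV. q i * D i j * q j)\<^sup>2 \<le> (\<Sum>i\<in>UNIV. \<Sum>j\<in>UNIV. (D i j)\<^sup>2) * (\<Sum>k\<in>UNIV. (q k)\<^sup>2)\<^sup>2"
proof -
  have "(\<Sum>i\<in>UNIV. \<Sum>j\<in>UNIV. q i * D i j * q j) = (\<Sum>x\<in>UNIV. D (fst x) (snd x) * (q (fst x) * q (snd x)))"
    by (simp add: sum2_prod algebra_simps)
  also have "\<dots>\<^sup>2 \<le> (\<Sum>x\<in>UNIV. (D (fst x) (snd x))\<^sup>2) * (\<Sum>x\<in>UNIV. (q (fst x) * q (snd x))\<^sup>2)"
    by (rule Cauchy_Schwarz_ineq_sum)
  also have "(\<Sum>x\<in>UNIV. (D (fst x) (snd x))\<^sup>2) = (\<Sum>i\<in>UNIV. \<Sum>j\<in>UNIV. (D i j)\<^sup>2)"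
    by (simp add: sum2_prod)
  also have "(\<Sum>x\<in>UNIV. (q (fst x) * q (snd x))\<^sup>2) = (\<Sum>k\<in>UNIV. (q k)\<^sup>2)\<^sup>2"
    unfolding sum2_prod[of "\<lambda>i j. (q i * q j)\<^sup>2", simplified, symmetric]
    by (simp add: power2_eq_square sum_distrib_left sum_distrib_right algebra_simps)
  finally show ?thesis .
qed


lemma scalar_final:
  fixes p W Wr1 Wr2 vv qv DD :: real
  assumes p: "p > 0" and W: "W > 0" and Wr: "Wr1 = W * Wr2" "Wr2 > 0"
    and cs: "qv\<^sup>2 \<le> DD * W\<^sup>2"
  shows "2 * (p/2) * Wr1 * ((p-2) * (2 * vv/W - 2 * qv\<^sup>2/W\<^sup>2))
       - (p/2) * (p/2 - 1) * Wr2 * (4 * (vv + (p-2) * qv\<^sup>2 / W))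
       - 2 * (p/2) * Wr1 * (DD + (p-2) * vv / W) \<le> 0"
proof -
  have eq: "2 * (p/2) * Wr1 * ((p-2) * (2 * vv/W - 2 * qv\<^sup>2/W\<^sup>2))
       - (p/2) * (p/2 - 1) * Wr2 * (4 * (vv + (p-2) * qv\<^sup>2 / W))
       - 2 * (p/2) * Wr1 * (DD + (p-2) * vv / W)
       = - (p * Wr2 / W) * (W\<^sup>2 * DD + p * (p - 2) * qv\<^sup>2)"
    using W unfolding Wr by (simp add: field_simps power2_eq_square)
  have "W\<^sup>2 * DD + p * (p - 2) * qv\<^sup>2 = (W\<^sup>2 * DD - qv\<^sup>2) + (p - 1)\<^sup>2 * qv\<^sup>2"
    by (simp add: power2_eq_square algebra_simps)
  also have "\<dots> \<ge> 0" using cs by (intro add_nonneg_nonneg mult_nonneg_nonneg) (auto simp: mult.commute)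
  finally have nn: "W\<^sup>2 * DD + p * (p - 2) * qv\<^sup>2 \<ge> 0" .
  have "p * Wr2 / W \<ge> 0" using p W Wr by simp
  then have "(p * Wr2 / W) * (W\<^sup>2 * DD + p * (p - 2) * qv\<^sup>2) \<ge> 0" using nn by (rule mult_nonneg_nonneg)
  then show ?thesis unfolding eq by linarith
qed


lemma swap3: "(\<Sum>k\<in>UNIV. \<Sum>i\<in>UNIV. \<Sum>j\<in>UNIV. f k i j) = (\<Sum>i\<in>UNIV. \<Sum>j\<in>UNIV. \<Sum>k\<in>UNIV. (f k i j :: real))"
proof -
  have "(\<Sum>k\<in>UNIV. \<Sum>i\<in>UNIV. \<Sum>j\<in>UNIV. f k i j) = (\<Sum>i\<in>UNIV. \<Sum>k\<in>UNIV. \<Sum>j\<in>UNIV. f k i j)"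
    by (rule sum.swap)
  also have "\<dots> = (\<Sum>i\<in>UNIV. \<Sum>j\<in>UNIV. \<Sum>k\<in>UNIV. f k i j)"
    by (rule sum.cong[OF refl], rule sum.swap)
  finally show ?thesis .
qed

context
  fixes q :: "'n::finite \<Rightarrow> real" and D :: "'n \<Rightarrow> 'n \<Rightarrow> real" and p W :: real
  assumes Dsym: "\<And>i k. D i k = D k i"
begin

definition "V i = (\<Sum>l\<in>UNIV. D i l * q l)"
definition "vv = (\<Sum>i\<in>UNIV. (V i)\<^sup>2)"
definition "qv = (\<Sum>i\<in>UNIV. q i * V i)"
definition "DD = (\<Sum>i\<in>UNIV. \<Sum>j\<in>UNIV. (D i j)\<^sup>2)"

lemma DWv_V: "DWv q D i = 2 * V i"
  by (simp add: DWv_def V_def mult.commute)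

lemma colV: "(\<Sum>i\<in>UNIV. q i * D i k) = V k"
  unfolding V_def by (rule sum.cong) (auto simp: Dsym mult.commute)

lemma qv_quad: "qv = (\<Sum>i\<in>UNIV. \<Sum>j\<in>UNIV. q i * D i j * q j)"
  by (simp add: qv_def V_def sum_distrib_left mult.assoc)

lemma Aco_split: "Aco p W q i j * S = (if i = j then 1 else 0) * S + ((p - 2) / W) * (q i * q j * S)"
  by (simp add: Aco_def distrib_right)

lemma F4: "(\<Sum>i\<in>UNIV. \<Sum>j\<in>UNIV. Aco p W q i j * (\<Sum>k\<in>UNIV. D i k * D j k)) = DD + (p - 2) * vv / W"
proof -
  have "(\<Sum>i\<in>UNIV. \<Sum>j\<in>UNIV. Aco p W q i j * (\<Sum>k\<in>UNIV. D i k * D j k))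
      = (\<Sum>i\<in>UNIV. \<Sum>j\<in>UNIV. (if i = j then 1 else 0) * (\<Sum>k\<in>UNIV. D i k * D j k))
        + (p - 2) / W * (\<Sum>i\<in>UNIV. \<Sum>j\<in>UNIV. q i * q j * (\<Sum>k\<in>UNIV. D i k * D j k))"
    by (simp only: Aco_split sum.distrib sum_distrib_left)
  also have "(\<Sum>i\<in>UNIV. \<Sum>j\<in>UNIV. (if i = j then 1 else 0) * (\<Sum>k\<in>UNIV. D i k * D j k)) = DD"
    unfolding sum_delta2 DD_def by (simp add: power2_eq_square)
  also have "(\<Sum>i\<in>UNIV. \<Sum>j\<in>UNIV. q i * q j * (\<Sum>k\<in>UNIV. D i k * D j k)) = (\<Sum>k\<in>UNIV. V k * V k)"
  proof -
    have "(\<Sum>i\<in>UNIV. \<Sum>j\<in>UNIV. q i * q j * (\<Sum>k\<in>UNIV. D i k * D j k))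
        = (\<Sum>i\<in>UNIV. \<Sum>j\<in>UNIV. \<Sum>k\<in>UNIV. q i * D i k * (q j * D j k))"
      by (simp add: sum_distrib_left mult_ac)
    also have "\<dots> = (\<Sum>k\<in>UNIV. \<Sum>i\<in>UNIV. \<Sum>j\<in>UNIV. q i * D i k * (q j * D j k))"
      by (rule swap3[symmetric])
    also have "\<dots> = (\<Sum>k\<in>UNIV. (\<Sum>i\<in>UNIV. q i * D i k) * (\<Sum>j\<in>UNIV. q j * D j k))"
      by (simp add: sum_product)
    finally show ?thesis by (simp add: colV)
  qed
  finally show ?thesis by (simp add: vv_def power2_eq_square)
qed

lemma F3: "(\<Sum>i\<in>UNIV. \<Sum>j\<in>UNIV. Aco p W q i j * DWv q D i * DWv q D j) = 4 * (vv + (p - 2) * qv\<^sup>2 / W)"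
proof -
  have "(\<Sum>i\<in>UNIV. \<Sum>j\<in>UNIV. Aco p W q i j * DWv q D i * DWv q D j)
      = 4 * (\<Sum>i\<in>UNIV. \<Sum>j\<in>UNIV. (if i = j then 1 else 0) * (V i * V j))
        + 4 * ((p - 2) / W) * ((\<Sum>i\<in>UNIV. q i * V i) * (\<Sum>j\<in>UNIV. q j * V j))"
    by (simp add: DWv_V Aco_def sum_product distrib_right sum.distrib sum_distrib_left algebra_simps)
  also have "(\<Sum>i\<in>UNIV. \<Sum>j\<in>UNIV. (if i = j then 1 else 0) * (V i * V j)) = vv"
    unfolding sum_delta2 vv_def by (simp add: power2_eq_square)
  finally show ?thesis by (simp add: qv_def power2_eq_square algebra_simps)
qed

lemma dAco_pt: "dAco p W q D k i j * D i j = (p - 2) / W\<^sup>2 * (W * (D k i * q j * D i j) + W * (q i * D k j * D i j) - DWv q D k * (q i * q j * D i j))"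
  by (cases "W = 0") (simp_all add: dAco_def field_simps)

lemma F2: "(\<Sum>k\<in>UNIV. q k * (\<Sum>i\<in>UNIV. \<Sum>j\<in>UNIV. dAco p W q D k i j * D i j))
     = (p - 2) * (2 * vv / W - 2 * qv\<^sup>2 / W\<^sup>2)"
proof -
  let ?X1 = "\<Sum>k\<in>UNIV. \<Sum>i\<in>UNIV. \<Sum>j\<in>UNIV. q k * (D k i * q j * D i j)"
  let ?X2 = "\<Sum>k\<in>UNIV. \<Sum>i\<in>UNIV. \<Sum>j\<in>UNIV. q k * (q i * D k j * D i j)"
  let ?Y = "\<Sum>i\<in>UNIV. \<Sum>j\<in>UNIV. q i * q j * D i j"
  have e1: "(\<Sum>k\<in>UNIV. q k * (\<Sum>i\<in>UNIV. \<Sum>j\<in>UNIV. dAco p W q D k i j * D i j))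
      = (p - 2) / W\<^sup>2 * (W * ?X1 + W * ?X2 - (\<Sum>k\<in>UNIV. \<Sum>i\<in>UNIV. \<Sum>j\<in>UNIV. q k * (DWv q D k * (q i * q j * D i j))))"
    unfolding dAco_pt
    by (simp add: sum_distrib_left sum_distrib_right sum.distrib sum_subtractf right_diff_distrib distrib_left mult_ac)
  have x1: "?X1 = vv"
  proof -
    have "?X1 = (\<Sum>i\<in>UNIV. \<Sum>k\<in>UNIV. \<Sum>j\<in>UNIV. q k * (D k i * q j * D i j))"
      by (rule sum.swap)
    also have "\<dots> = (\<Sum>i\<in>UNIV. \<Sum>k\<in>UNIV. \<Sum>j\<in>UNIV. q k * D k i * (D i j * q j))"
      by (simp add: mult_ac)
    also have "\<dots> = (\<Sum>i\<in>UNIV. (\<Sum>k\<in>UNIV. q k * D k i) * (\<Sum>j\<in>UNIV. D i j * q j))"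
      by (simp add: sum_product)
    finally show ?thesis by (simp add: colV V_def[symmetric] vv_def power2_eq_square)
  qed
  have x2: "?X2 = vv"
  proof -
    have "?X2 = (\<Sum>i\<in>UNIV. \<Sum>j\<in>UNIV. \<Sum>k\<in>UNIV. q k * (q i * D k j * D i j))"
      by (rule swap3)
    also have "\<dots> = (\<Sum>j\<in>UNIV. \<Sum>i\<in>UNIV. \<Sum>k\<in>UNIV. q k * (q i * D k j * D i j))"
      by (rule sum.swap)
    also have "\<dots> = (\<Sum>j\<in>UNIV. \<Sum>k\<in>UNIV. \<Sum>i\<in>UNIV. q k * (q i * D k j * D i j))"
      by (rule sum.cong[OF refl], rule sum.swap)
    also have "\<dots> = (\<Sum>j\<in>UNIV. \<Sum>k\<in>UNIV. \<Sum>i\<in>UNIV. q k * D k j * (q i * D i j))"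
      by (simp add: mult_ac)
    also have "\<dots> = (\<Sum>j\<in>UNIV. (\<Sum>k\<in>UNIV. q k * D k j) * (\<Sum>i\<in>UNIV. q i * D i j))"
      by (simp add: sum_product)
    finally show ?thesis by (simp add: colV vv_def power2_eq_square)
  qed
  have y: "?Y = qv" unfolding qv_quad by (simp add: mult_ac)
  have yz: "(\<Sum>k\<in>UNIV. \<Sum>i\<in>UNIV. \<Sum>j\<in>UNIV. q k * (DWv q D k * (q i * q j * D i j))) = (\<Sum>k\<in>UNIV. q k * DWv q D k) * ?Y"
    by (subst swap3) (simp only: sum_distrib_left sum_distrib_right mult.assoc)
  have z: "(\<Sum>k\<in>UNIV. q k * DWv q D k) = 2 * qv"
    by (simp add: DWv_V qv_def sum_distrib_left mult_ac)
  show ?thesis unfolding e1 x1 x2 yz y z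
    by (cases "W = 0") (simp_all add: field_simps power2_eq_square)
qed

lemma F1:
  fixes A :: "'n \<Rightarrow> 'n \<Rightarrow> real" and T :: "'n \<Rightarrow> 'n \<Rightarrow> 'n \<Rightarrow> real"
  assumes Tsym: "\<And>i j k. T k i j = T i j k"
  shows "(\<Sum>k\<in>UNIV. q k * (\<Sum>i\<in>UNIV. \<Sum>j\<in>UNIV. A i j * T k i j))
       = (\<Sum>i\<in>UNIV. \<Sum>j\<in>UNIV. A i j * (\<Sum>k\<in>UNIV. q k * T i j k))"
proof -
  have "(\<Sum>k\<in>UNIV. q k * (\<Sum>i\<in>UNIV. \<Sum>j\<in>UNIV. A i j * T k i j))
      = (\<Sum>k\<in>UNIV. \<Sum>i\<in>UNIV. \<Sum>j\<in>UNIV. A i j * (q k * T k i j))"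
    by (simp add: sum_distrib_left mult_ac)
  also have "\<dots> = (\<Sum>i\<in>UNIV. \<Sum>j\<in>UNIV. \<Sum>k\<in>UNIV. A i j * (q k * T k i j))"
    by (rule swap3)
  also have "\<dots> = (\<Sum>i\<in>UNIV. \<Sum>j\<in>UNIV. A i j * (\<Sum>k\<in>UNIV. q k * T k i j))"
    by (simp add: sum_distrib_left)
  also have "\<dots> = (\<Sum>i\<in>UNIV. \<Sum>j\<in>UNIV. A i j * (\<Sum>k\<in>UNIV. q k * T i j k))"
    by (intro sum.cong refl arg_cong2[where f="(*)"]) (metis Tsym)
  finally show ?thesis .
qed

lemma alg_main:
  fixes T :: "'n \<Rightarrow> 'n \<Rightarrow> 'n \<Rightarrow> real" and Tm :: "'n \<Rightarrow> real" and Wr1 Wr2 :: real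
  assumes Tsym: "\<And>i j k. T k i j = T i j k"
    and Tm: "\<And>k. Tm k = (\<Sum>i\<in>UNIV. \<Sum>j\<in>UNIV. dAco p W q D k i j * D i j + Aco p W q i j * T k i j)"
    and p: "p > 0" and W: "W > 0" and Wsum: "(\<Sum>k\<in>UNIV. (q k)\<^sup>2) \<le> W"
    and Wr: "Wr1 = W * Wr2" "Wr2 > 0"
  shows "(p/2) * Wr1 * (2 * (\<Sum>k\<in>UNIV. q k * Tm k))
     - (\<Sum>i\<in>UNIV. \<Sum>j\<in>UNIV. Aco p W q i j * ((p/2) * ((p/2 - 1) * Wr2 * DWv q D i) * DWv q D j
          + (p/2) * Wr1 * (2 * (\<Sum>k\<in>UNIV. D i k * D j k + q k * T i j k)))) \<le> 0"
proof -
  have t1: "(\<Sum>k\<in>UNIV. q k * Tm k) = (\<Sum>k\<in>UNIV. q k * (\<Sum>i\<in>UNIV. \<Sum>j\<in>UNIV. dAco p W q D k i j * D i j))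
       + (\<Sum>k\<in>UNIV. q k * (\<Sum>i\<in>UNIV. \<Sum>j\<in>UNIV. Aco p W q i j * T k i j))"
    by (simp add: Tm sum.distrib distrib_left)
  have pt: "\<And>i j. Aco p W q i j * ((p/2) * ((p/2 - 1) * Wr2 * DWv q D i) * DWv q D j
          + (p/2) * Wr1 * (2 * (\<Sum>k\<in>UNIV. D i k * D j k + q k * T i j k)))
        = ((p/2) * (p/2 - 1) * Wr2) * (Aco p W q i j * DWv q D i * DWv q D j)
          + (2 * (p/2) * Wr1) * (Aco p W q i j * (\<Sum>k\<in>UNIV. D i k * D j k))
          + (2 * (p/2) * Wr1) * (Aco p W q i j * (\<Sum>k\<in>UNIV. q k * T i j k))"
    by (simp add: sum.distrib algebra_simps)
  have t2: "(\<Sum>i\<in>UNIV. \<Sum>j\<in>UNIV. Aco p W q i j * ((p/2) * ((p/2 - 1) * Wr2 * DWv q D i) * DWv q D j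
          + (p/2) * Wr1 * (2 * (\<Sum>k\<in>UNIV. D i k * D j k + q k * T i j k))))
      = ((p/2) * (p/2 - 1) * Wr2) * (\<Sum>i\<in>UNIV. \<Sum>j\<in>UNIV. Aco p W q i j * DWv q D i * DWv q D j)
        + (2 * (p/2) * Wr1) * (\<Sum>i\<in>UNIV. \<Sum>j\<in>UNIV. Aco p W q i j * (\<Sum>k\<in>UNIV. D i k * D j k))
        + (2 * (p/2) * Wr1) * (\<Sum>i\<in>UNIV. \<Sum>j\<in>UNIV. Aco p W q i j * (\<Sum>k\<in>UNIV. q k * T i j k))"
    unfolding pt by (simp only: sum.distrib sum_distrib_left[symmetric])
  have sq: "(\<Sum>k\<in>UNIV. (q k)\<^sup>2) \<ge> 0" by (simp add: sum_nonneg)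
  have DDnn: "DD \<ge> 0" unfolding DD_def by (simp add: sum_nonneg)
  have "qv\<^sup>2 \<le> DD * (\<Sum>k\<in>UNIV. (q k)\<^sup>2)\<^sup>2"
    unfolding qv_quad DD_def by (rule cs_quad)
  also have "\<dots> \<le> DD * W\<^sup>2"
    using sq Wsum DDnn by (intro mult_left_mono power_mono) auto
  finally have cs: "qv\<^sup>2 \<le> DD * W\<^sup>2" .
  have "2 * (p/2) * Wr1 * ((p-2) * (2 * vv/W - 2 * qv\<^sup>2/W\<^sup>2))
       - (p/2) * (p/2 - 1) * Wr2 * (4 * (vv + (p-2) * qv\<^sup>2 / W))
       - 2 * (p/2) * Wr1 * (DD + (p-2) * vv / W) \<le> 0"
    by (rule scalar_final[OF p W Wr cs])
  then show ?thesis
    unfolding t1 t2 F1[OF Tsym] F2 F3 F4 by (simp add: algebra_simps)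
qed

end


declare dds.simps[simp del]

lemma dds_Nil[simp]: "dds S [] g = g" by (simp add: dds.simps)

lemma grad_comp: "grad u y $ k = dds Q1 [espace k] u y"
  by (simp add: grad_def pd1_def)

lemma norm_grad: "(norm (grad u y))\<^sup>2 = (\<Sum>k\<in>UNIV. (dds Q1 [espace k] u y)\<^sup>2)"
  unfolding power2_norm_eq_inner inner_vec_def by (simp add: grad_comp power2_eq_square)

lemma espace_dirs: "espace i \<in> dirs" and etime_dirs: "etime \<in> dirs"
  by (auto simp: dirs_def)

lemma W_deriv:
  assumes u: "smooth_on Q1 u" and z: "z \<in> Q1"
  shows "((\<lambda>h. (norm (grad u (z + h *\<^sub>R v)))\<^sup>2 + \<epsilon>\<^sup>2) has_real_derivative
           2 * (\<Sum>k\<in>UNIV. dds Q1 [espace k] u z * dds Q1 [v, espace k] u z)) (at 0 within TT z v)"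
proof -
  have d: "\<And>k. ((\<lambda>h. dds Q1 [espace k] u (z + h *\<^sub>R v)) has_real_derivative dds Q1 [v, espace k] u z) (at 0 within TT z v)"
    using smooth_deriv[OF u z] by blast
  have "((\<lambda>h. (\<Sum>k\<in>UNIV. (dds Q1 [espace k] u (z + h *\<^sub>R v))\<^sup>2) + \<epsilon>\<^sup>2) has_real_derivative
           2 * (\<Sum>k\<in>UNIV. dds Q1 [espace k] u z * dds Q1 [v, espace k] u z)) (at 0 within TT z v)"
    apply (rule DERIV_cong)
    apply (rule DERIV_add)
    apply (rule DERIV_sum)
    apply (rule DERIV_power)
    apply (rule d)
    apply (rule DERIV_const)
    by (simp add: sum_distrib_left mult_ac)
  then show ?thesis by (simp add: norm_grad)
qed


lemma W_pos: "(\<epsilon>::real) > 0 \<Longrightarrow> (norm (x::real^'n))\<^sup>2 + \<epsilon>\<^sup>2 > 0"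
  by (simp add: add_nonneg_pos)

lemma Wpow_deriv:
  assumes u: "smooth_on Q1 u" and z: "z \<in> Q1" and eps: "\<epsilon> > 0"
  shows "((\<lambda>h. ((norm (grad u (z + h *\<^sub>R v)))\<^sup>2 + \<epsilon>\<^sup>2) powr r) has_real_derivative
           r * ((norm (grad u z))\<^sup>2 + \<epsilon>\<^sup>2) powr (r - 1) * (2 * (\<Sum>k\<in>UNIV. dds Q1 [espace k] u z * dds Q1 [v, espace k] u z))) (at 0 within TT z v)"
proof -
  have "DERIV (\<lambda>w. w powr r) ((norm (grad u (z + 0 *\<^sub>R v)))\<^sup>2 + \<epsilon>\<^sup>2) :> r * ((norm (grad u (z + 0 *\<^sub>R v)))\<^sup>2 + \<epsilon>\<^sup>2) powr (r - 1)"
    by (rule has_real_derivative_powr) (simp add: W_pos[OF eps])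
  from DERIV_chain2[OF this W_deriv[OF u z, of v \<epsilon>]] show ?thesis by simp
qed

lemma pd_Phi:
  assumes u: "smooth_on Q1 u" and z: "z \<in> Q1" and eps: "\<epsilon> > 0" and v: "v \<in> dirs"
  shows "ddir Q1 v (\<lambda>w. ((norm (grad u w))\<^sup>2 + \<epsilon>\<^sup>2) powr r) z =
           r * ((norm (grad u z))\<^sup>2 + \<epsilon>\<^sup>2) powr (r - 1) * (2 * (\<Sum>k\<in>UNIV. dds Q1 [espace k] u z * dds Q1 [v, espace k] u z))"
  by (rule ddir_eq[OF z v Wpow_deriv[OF u z eps]])

lemma pd2_Phi:
  assumes u: "smooth_on Q1 u" and z: "z \<in> Q1" and eps: "\<epsilon> > 0"
  shows "pd2 i j (\<lambda>w. ((norm (grad u w))\<^sup>2 + \<epsilon>\<^sup>2) powr r) z =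
    r * ((r - 1) * ((norm (grad u z))\<^sup>2 + \<epsilon>\<^sup>2) powr (r - 2) * (2 * (\<Sum>k\<in>UNIV. dds Q1 [espace k] u z * dds Q1 [espace i, espace k] u z)))
      * (2 * (\<Sum>k\<in>UNIV. dds Q1 [espace k] u z * dds Q1 [espace j, espace k] u z))
    + r * ((norm (grad u z))\<^sup>2 + \<epsilon>\<^sup>2) powr (r - 1)
      * (2 * (\<Sum>k\<in>UNIV. dds Q1 [espace i, espace k] u z * dds Q1 [espace j, espace k] u z
                 + dds Q1 [espace k] u z * dds Q1 [espace i, espace j, espace k] u z))"
proof -
  let ?Phi = "\<lambda>w. ((norm (grad u w))\<^sup>2 + \<epsilon>\<^sup>2) powr r"
  let ?G = "\<lambda>y. r * ((norm (grad u y))\<^sup>2 + \<epsilon>\<^sup>2) powr (r - 1) * (2 * (\<Sum>k\<in>UNIV. dds Q1 [espace k] u y * dds Q1 [espace j, espace k] u y))"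
  have eq: "\<forall>y\<in>Q1. ?G y = dds Q1 [espace j] ?Phi y"
    using pd_Phi[OF u _ eps espace_dirs] by (simp add: dds.simps)
  have d1: "\<And>k. ((\<lambda>h. dds Q1 [espace k] u (z + h *\<^sub>R espace i)) has_real_derivative dds Q1 [espace i, espace k] u z) (at 0 within TT z (espace i))"
    and d2: "\<And>k. ((\<lambda>h. dds Q1 [espace j, espace k] u (z + h *\<^sub>R espace i)) has_real_derivative dds Q1 [espace i, espace j, espace k] u z) (at 0 within TT z (espace i))"
    using smooth_deriv[OF u z] by blast+
  have "((\<lambda>h. ?G (z + h *\<^sub>R espace i)) has_real_derivative
    r * ((r - 1) * ((norm (grad u z))\<^sup>2 + \<epsilon>\<^sup>2) powr (r - 1 - 1) * (2 * (\<Sum>k\<in>UNIV. dds Q1 [espace k] u z * dds Q1 [espace i, espace k] u z)))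
      * (2 * (\<Sum>k\<in>UNIV. dds Q1 [espace k] u z * dds Q1 [espace j, espace k] u z))
    + r * ((norm (grad u z))\<^sup>2 + \<epsilon>\<^sup>2) powr (r - 1)
      * (2 * (\<Sum>k\<in>UNIV. dds Q1 [espace i, espace k] u z * dds Q1 [espace j, espace k] u z
                 + dds Q1 [espace k] u z * dds Q1 [espace i, espace j, espace k] u z))) (at 0 within TT z (espace i))"
    apply (rule DERIV_cong)
    apply (rule DERIV_mult)
    apply (rule DERIV_cmult)
    apply (rule Wpow_deriv[OF u z eps])
    apply (rule DERIV_cmult)
    apply (rule DERIV_sum)
    apply (rule DERIV_mult)
    apply (rule d1)
    apply (rule d2)
    apply (simp add: algebra_simps sum.distrib)
    done
  then have "((\<lambda>h. dds Q1 [espace j] ?Phi (z + h *\<^sub>R espace i)) has_real_derivative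
    r * ((r - 1) * ((norm (grad u z))\<^sup>2 + \<epsilon>\<^sup>2) powr (r - 1 - 1) * (2 * (\<Sum>k\<in>UNIV. dds Q1 [espace k] u z * dds Q1 [espace i, espace k] u z)))
      * (2 * (\<Sum>k\<in>UNIV. dds Q1 [espace k] u z * dds Q1 [espace j, espace k] u z))
    + r * ((norm (grad u z))\<^sup>2 + \<epsilon>\<^sup>2) powr (r - 1)
      * (2 * (\<Sum>k\<in>UNIV. dds Q1 [espace i, espace k] u z * dds Q1 [espace j, espace k] u z
                 + dds Q1 [espace k] u z * dds Q1 [espace i, espace j, espace k] u z))) (at 0 within TT z (espace i))"
    by (rule deriv_cong[OF eq z])
  from ddir_eq[OF z espace_dirs this] show ?thesis
    by (simp add: pd2_def dds.simps diff_diff_eq)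
qed


lemma T3:
  assumes u: "smooth_on Q1 u" and z: "z \<in> Q1"
  shows "dds Q1 [espace k, espace i, espace j] u z = dds Q1 [espace i, espace j, espace k] u z"
proof -
  have "dds Q1 [espace k, espace i, espace j] u z = dds Q1 [espace k, espace i] (dds Q1 [espace j] u) z"
    by (simp add: dds_append)
  also have "\<dots> = dds Q1 [espace i, espace k] (dds Q1 [espace j] u) z"
    by (rule clairaut[OF smooth_dds[OF u] z])
  also have "\<dots> = dds Q1 [espace i, espace k, espace j] u z"
    by (simp add: dds_append)
  finally have s1: "dds Q1 [espace k, espace i, espace j] u z = dds Q1 [espace i, espace k, espace j] u z" .
  have "((\<lambda>h. dds Q1 [espace k, espace j] u (z + h *\<^sub>R espace i)) has_real_derivative dds Q1 [espace i, espace k, espace j] u z) (at 0 within TT z (espace i))"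
    using smooth_deriv[OF u z] by blast
  moreover have "\<forall>y\<in>Q1. dds Q1 [espace k, espace j] u y = dds Q1 [espace j, espace k] u y"
    using clairaut[OF u] by blast
  ultimately have "((\<lambda>h. dds Q1 [espace j, espace k] u (z + h *\<^sub>R espace i)) has_real_derivative dds Q1 [espace i, espace k, espace j] u z) (at 0 within TT z (espace i))"
    using deriv_cong[OF _ z] by blast
  from ddir_eq[OF z espace_dirs this] have "dds Q1 [espace i, espace j, espace k] u z = dds Q1 [espace i, espace k, espace j] u z"
    by (simp add: dds.simps)
  with s1 show ?thesis by simp
qed

lemma acoef_Aco: "acoef p \<epsilon> i j (grad u y) = Aco p ((norm (grad u y))\<^sup>2 + \<epsilon>\<^sup>2) (\<lambda>k. dds Q1 [espace k] u y) i j"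
  by (simp add: acoef_def Aco_def grad_comp)

lemma Tm_eq:
  assumes u: "smooth_on Q1 u" and z: "z \<in> Q1" and eps: "\<epsilon> > 0"
    and eqn: "\<forall>z\<in>Q1. pdt u z = (\<Sum>i\<in>UNIV. \<Sum>j\<in>UNIV. acoef p \<epsilon> i j (grad u z) * pd2 i j u z)"
  shows "dds Q1 [etime, espace k] u z =
    (\<Sum>i\<in>UNIV. \<Sum>j\<in>UNIV. dAco p ((norm (grad u z))\<^sup>2 + \<epsilon>\<^sup>2) (\<lambda>k. dds Q1 [espace k] u z) (\<lambda>i k. dds Q1 [espace i, espace k] u z) k i j
        * dds Q1 [espace i, espace j] u z
      + Aco p ((norm (grad u z))\<^sup>2 + \<epsilon>\<^sup>2) (\<lambda>k. dds Q1 [espace k] u z) i j * dds Q1 [espace k, espace i, espace j] u z)"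
proof -
  let ?W = "\<lambda>y. (norm (grad u y))\<^sup>2 + \<epsilon>\<^sup>2"
  let ?R = "\<lambda>y. \<Sum>i\<in>UNIV. \<Sum>j\<in>UNIV. ((if i = j then 1 else 0) + (p - 2) * (dds Q1 [espace i] u y * dds Q1 [espace j] u y) / ?W y)
               * dds Q1 [espace i, espace j] u y"
  have Req: "\<forall>y\<in>Q1. ?R y = dds Q1 [etime] u y"
    using eqn by (simp add: pdt_def pd2_def acoef_Aco Aco_def)
  have Wz: "?W z \<noteq> 0" using W_pos[OF eps, of "grad u z"] by linarith
  have d1: "\<And>k. ((\<lambda>h. dds Q1 [espace k] u (z + h *\<^sub>R espace m)) has_real_derivative dds Q1 [espace m, espace k] u z) (at 0 within TT z (espace m))"
    and d2: "\<And>i j. ((\<lambda>h. dds Q1 [espace i, espace j] u (z + h *\<^sub>R espace m)) has_real_derivative dds Q1 [espace m, espace i, espace j] u z) (at 0 within TT z (espace m))"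
    for m using smooth_deriv[OF u z] by blast+
  have "((\<lambda>h. ?R (z + h *\<^sub>R espace k)) has_real_derivative
    (\<Sum>i\<in>UNIV. \<Sum>j\<in>UNIV. dAco p (?W z) (\<lambda>k. dds Q1 [espace k] u z) (\<lambda>i k. dds Q1 [espace i, espace k] u z) k i j
        * dds Q1 [espace i, espace j] u z
      + Aco p (?W z) (\<lambda>k. dds Q1 [espace k] u z) i j * dds Q1 [espace k, espace i, espace j] u z)) (at 0 within TT z (espace k))"
    apply (rule DERIV_cong)
    apply (rule DERIV_sum)
    apply (rule DERIV_sum)
    apply (rule DERIV_mult)
    apply (rule DERIV_add)
    apply (rule DERIV_const)
    apply (rule DERIV_divide)
    apply (rule DERIV_cmult)
    apply (rule DERIV_mult)
    apply (rule d1)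
    apply (rule d1)
    apply (rule W_deriv[OF u z])
    apply (use eps in simp)
    apply (rule d2)
    apply (intro sum.cong refl)
    apply (simp add: dAco_def Aco_def DWv_def Wz field_simps power2_eq_square)
    done
  then have "((\<lambda>h. dds Q1 [etime] u (z + h *\<^sub>R espace k)) has_real_derivative
    (\<Sum>i\<in>UNIV. \<Sum>j\<in>UNIV. dAco p (?W z) (\<lambda>k. dds Q1 [espace k] u z) (\<lambda>i k. dds Q1 [espace i, espace k] u z) k i j
        * dds Q1 [espace i, espace j] u z
      + Aco p (?W z) (\<lambda>k. dds Q1 [espace k] u z) i j * dds Q1 [espace k, espace i, espace j] u z)) (at 0 within TT z (espace k))"
    by (rule deriv_cong[OF Req z])
  from ddir_eq[OF z espace_dirs this]
  have "dds Q1 [espace k, etime] u z = (\<Sum>i\<in>UNIV. \<Sum>j\<in>UNIV. dAco p (?W z) (\<lambda>k. dds Q1 [espace k] u z) (\<lambda>i k. dds Q1 [espace i, espace k] u z) k i j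
        * dds Q1 [espace i, espace j] u z
      + Aco p (?W z) (\<lambda>k. dds Q1 [espace k] u z) i j * dds Q1 [espace k, espace i, espace j] u z)"
    by (simp add: dds.simps)
  moreover have "dds Q1 [etime, espace k] u z = dds Q1 [espace k, etime] u z"
    by (rule clairaut[OF u z])
  ultimately show ?thesis by simp
qed


theorem lemma3p1:
  fixes u :: "(real^'n) \<times> real \<Rightarrow> real" and p \<epsilon> :: real
  assumes "1 < p" and "0 < \<epsilon>"
    and "smooth_on Q1 u"
    and "\<forall>z\<in>Q1. pdt u z = (\<Sum>i\<in>UNIV. \<Sum>j\<in>UNIV. acoef p \<epsilon> i j (grad u z) * pd2 i j u z)"
  shows "\<forall>z\<in>Q1. pdt (\<lambda>w. ((norm (grad u w))\<^sup>2 + \<epsilon>\<^sup>2) powr (p / 2)) z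
            - (\<Sum>i\<in>UNIV. \<Sum>j\<in>UNIV. acoef p \<epsilon> i j (grad u z)
                 * pd2 i j (\<lambda>w. ((norm (grad u w))\<^sup>2 + \<epsilon>\<^sup>2) powr (p / 2)) z) \<le> 0"
proof (intro ballI)
  fix z :: "(real^'n) \<times> real" assume z: "z \<in> Q1"
  have p: "p > 0" using assms(1) by simp
  have eps: "\<epsilon> > 0" by (rule assms(2))
  have u: "smooth_on Q1 u" by (rule assms(3))
  define q where "q = (\<lambda>k. dds Q1 [espace k] u z)"
  define D where "D = (\<lambda>i k. dds Q1 [espace i, espace k] u z)"
  define T where "T = (\<lambda>i j k. dds Q1 [espace i, espace j, espace k] u z)"
  define Tm where "Tm = (\<lambda>k. dds Q1 [etime, espace k] u z)"
  define W where "W = (norm (grad u z))\<^sup>2 + \<epsilon>\<^sup>2"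
  have Dsym: "\<And>i k. D i k = D k i" unfolding D_def by (rule clairaut[OF u z])
  have Tsym: "\<And>i j k. T k i j = T i j k" unfolding T_def by (rule T3[OF u z])
  have TmE: "\<And>k. Tm k = (\<Sum>i\<in>UNIV. \<Sum>j\<in>UNIV. dAco p W q D k i j * D i j + Aco p W q i j * T k i j)"
    unfolding Tm_def W_def q_def D_def T_def by (rule Tm_eq[OF u z eps assms(4)])
  have Wp: "W > 0" unfolding W_def by (rule W_pos[OF eps])
  have Wsum: "(\<Sum>k\<in>UNIV. (q k)\<^sup>2) \<le> W" unfolding W_def q_def norm_grad by simp
  have Wr: "W powr (p/2 - 1) = W * W powr (p/2 - 2)"
  proof -
    have "W powr (p/2 - 1) = W powr (1 + (p/2 - 2))" by simp
    also have "\<dots> = W powr 1 * W powr (p/2 - 2)" by (rule powr_add)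
    finally show ?thesis using Wp by simp
  qed
  have Wr2: "W powr (p/2 - 2) > 0" using Wp by simp
  have hpdt: "pdt (\<lambda>w. ((norm (grad u w))\<^sup>2 + \<epsilon>\<^sup>2) powr (p / 2)) z = (p/2) * W powr (p/2 - 1) * (2 * (\<Sum>k\<in>UNIV. q k * Tm k))"
    using pd_Phi[OF u z eps etime_dirs, of "p/2"] by (simp add: pdt_def dds.simps W_def q_def Tm_def)
  have hpd2: "\<And>i j. pd2 i j (\<lambda>w. ((norm (grad u w))\<^sup>2 + \<epsilon>\<^sup>2) powr (p / 2)) z =
      (p/2) * ((p/2 - 1) * W powr (p/2 - 2) * DWv q D i) * DWv q D j
      + (p/2) * W powr (p/2 - 1) * (2 * (\<Sum>k\<in>UNIV. D i k * D j k + q k * T i j k))"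
    using pd2_Phi[OF u z eps] by (simp add: W_def q_def D_def T_def DWv_def)
  have hac: "\<And>i j. acoef p \<epsilon> i j (grad u z) = Aco p W q i j"
    by (simp add: acoef_Aco W_def q_def)
  show "pdt (\<lambda>w. ((norm (grad u w))\<^sup>2 + \<epsilon>\<^sup>2) powr (p / 2)) z
            - (\<Sum>i\<in>UNIV. \<Sum>j\<in>UNIV. acoef p \<epsilon> i j (grad u z)
                 * pd2 i j (\<lambda>w. ((norm (grad u w))\<^sup>2 + \<epsilon>\<^sup>2) powr (p / 2)) z) \<le> 0"
    unfolding hpdt hpd2 hac
    by (rule alg_main[OF Dsym Tsym TmE p Wp Wsum Wr Wr2])
qed


end
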